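(* Let $q\geq 4$ be an integer and let $G=K_{q,q,\dots,q}$ be the complete $r$-partite graph on $rq$ vertices with all parts of size $q$. Then $\mathcal{Z}^{\mathrm{TS}}_+(G)$ and $\mathcal{Z}^{\mathrm{TE}}_+(G)$ both have exactly $r$ connected components.
   Context: PSD forcing: vertices are colored blue or white; if $B$ is the current set of blue vertices, $C$ a connected component of $G-B$, and $u$ a blue vertex with $N_G(u)\cap V(C)=\{v\}$, then $u$ may force $v$ to become blue. A PSD forcing set is a set of initially blue vertices from which repeated application of this rule turns every vertex blue; $\mathrm{Z}_+(G)$ is the minimum size of a PSD forcing set. $\mathcal{Z}^{\mathrm{TE}}_+(G)$ has as vertices the minimum PSD forcing sets of $G$, with $S_1S_2$ an edge iff $S_1\setminus S_2=\{v_1\}$ and $S_2\setminus S_1=\{v_2\}$ for some vertices $v_1,v_2$; $\mathcal{Z}^{\mathrm{TS}}_+(G)$ has the same vertices with the additional requirement $v_1v_2\in E(G)$. *)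

theory Defs
  imports Main
begin

text \<open>A graph is given by a finite vertex set V and a symmetric irreflexive
adjacency relation E (only its restriction to V matters).\<close>

definition reach_in :: "'a set \<Rightarrow> ('a \<Rightarrow> 'a \<Rightarrow> bool) \<Rightarrow> 'a \<Rightarrow> 'a \<Rightarrow> bool" where
  "reach_in W E = (\<lambda>x y. x \<in> W \<and> y \<in> W \<and> E x y)\<^sup>*\<^sup>*"

definition components_in :: "'a set \<Rightarrow> ('a \<Rightarrow> 'a \<Rightarrow> bool) \<Rightarrow> 'a set set" where
  "components_in W E = {{y \<in> W. reach_in W E x y} | x. x \<in> W}"

definition psd_step :: "'a set \<Rightarrow> ('a \<Rightarrow> 'a \<Rightarrow> bool) \<Rightarrow> 'a set \<Rightarrow> 'a set \<Rightarrow> bool" where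
  "psd_step V E B B' \<longleftrightarrow>
     (\<exists>u v C. u \<in> B \<and> C \<in> components_in (V - B) E \<and>
              {w \<in> C. E u w} = {v} \<and> B' = insert v B)"

definition psd_forcing_set :: "'a set \<Rightarrow> ('a \<Rightarrow> 'a \<Rightarrow> bool) \<Rightarrow> 'a set \<Rightarrow> bool" where
  "psd_forcing_set V E S \<longleftrightarrow> S \<subseteq> V \<and> (psd_step V E)\<^sup>*\<^sup>* S V"

definition psd_Z :: "'a set \<Rightarrow> ('a \<Rightarrow> 'a \<Rightarrow> bool) \<Rightarrow> nat" where
  "psd_Z V E = (LEAST k. \<exists>S. psd_forcing_set V E S \<and> card S = k)"

definition min_psd_sets :: "'a set \<Rightarrow> ('a \<Rightarrow> 'a \<Rightarrow> bool) \<Rightarrow> 'a set set" where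
  "min_psd_sets V E = {S. psd_forcing_set V E S \<and> card S = psd_Z V E}"

definition TE_adj :: "'a set \<Rightarrow> 'a set \<Rightarrow> bool" where
  "TE_adj S1 S2 \<longleftrightarrow> (\<exists>v1 v2. S1 - S2 = {v1} \<and> S2 - S1 = {v2})"

definition TS_adj :: "('a \<Rightarrow> 'a \<Rightarrow> bool) \<Rightarrow> 'a set \<Rightarrow> 'a set \<Rightarrow> bool" where
  "TS_adj E S1 S2 \<longleftrightarrow> (\<exists>v1 v2. S1 - S2 = {v1} \<and> S2 - S1 = {v2} \<and> E v1 v2)"

definition num_components :: "'b set \<Rightarrow> ('b \<Rightarrow> 'b \<Rightarrow> bool) \<Rightarrow> nat" where
  "num_components X R = card (components_in X R)"

text \<open>Complete r-partite graph K_{q,...,q}: vertex (i,j) is the j-th vertex of part i.\<close>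
definition Kmp_V :: "nat \<Rightarrow> nat \<Rightarrow> (nat \<times> nat) set" where
  "Kmp_V r q = {(i, j). i < r \<and> j < q}"

definition Kmp_E :: "nat \<times> nat \<Rightarrow> nat \<times> nat \<Rightarrow> bool" where
  "Kmp_E x y \<longleftrightarrow> fst x \<noteq> fst y"

end

theory Submission
  imports Defs
begin

definition Pt :: "nat \<Rightarrow> nat \<Rightarrow> (nat \<times> nat) set" where
  "Pt q j = {x. fst x = j \<and> snd x < q}"

definition goodW :: "nat \<Rightarrow> nat \<Rightarrow> nat \<Rightarrow> (nat \<times> nat) set \<Rightarrow> bool" where
  "goodW r q j W \<longleftrightarrow> j < r \<and> (W = Pt q j \<or>
     (\<exists>u v. u \<in> Pt q j \<and> v \<in> Kmp_V r q \<and> fst v \<noteq> j \<and> W = insert v (Pt q j - {u})))"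

lemma Kmp_V_mem: "x \<in> Kmp_V r q \<longleftrightarrow> fst x < r \<and> snd x < q"
  by (cases x) (simp add: Kmp_V_def)

lemma Pt_mem: "x \<in> Pt q j \<longleftrightarrow> fst x = j \<and> snd x < q"
  by (simp add: Pt_def)

lemma Pt_sub: "j < r \<Longrightarrow> Pt q j \<subseteq> Kmp_V r q"
  by (auto simp: Pt_mem Kmp_V_mem)

lemma Kmp_V_eq: "Kmp_V r q = {..<r} \<times> {..<q}"
  by (auto simp: Kmp_V_def)

lemma finite_V: "finite (Kmp_V r q)"
  by (simp add: Kmp_V_eq)

lemma card_V: "card (Kmp_V r q) = r * q"
  by (simp add: Kmp_V_eq card_cartesian_product)

lemma Pt_eq: "Pt q j = (\<lambda>k. (j, k)) ` {..<q}"
  by (auto simp: Pt_def)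

lemma finite_Pt: "finite (Pt q j)"
  by (simp add: Pt_eq)

lemma card_Pt: "card (Pt q j) = q"
  unfolding Pt_eq by (subst card_image) (auto simp: inj_on_def)

lemma reach_only:
  assumes "\<forall>y\<in>W. \<not> E x y" "reach_in W E x y"
  shows "y = x"
  using assms(2) unfolding reach_in_def
  by (rule converse_rtranclpE) (use assms(1) in auto)

lemma conn:
  assumes "x \<in> W" "y \<in> W" "a \<in> W" "b \<in> W" "fst a \<noteq> fst b"
  shows "reach_in W Kmp_E x y"
proof -
  have st: "reach_in W Kmp_E s t" if "s \<in> W" "t \<in> W" "fst s \<noteq> fst t" for s t
    unfolding reach_in_def Kmp_E_def by (rule r_into_rtranclp) (use that in simp)
  show ?thesis
  proof (cases "fst x = fst y")
    case False then show ?thesis by (rule st[rotated 2]) (use assms in auto)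
  next
    case True
    obtain z where z: "z \<in> W" "fst z \<noteq> fst x"
    proof (cases "fst a = fst x")
      case True then show ?thesis using that[of b] assms by simp
    next
      case False then show ?thesis using that[of a] assms by simp
    qed
    have "reach_in W Kmp_E x z" by (rule st) (use z assms in auto)
    moreover have "reach_in W Kmp_E z y" by (rule st) (use z assms True in auto)
    ultimately show ?thesis unfolding reach_in_def by (rule rtranclp_trans)
  qed
qed

lemma comp_all:
  assumes "a \<in> W" "b \<in> W" "fst a \<noteq> fst b"
  shows "components_in W Kmp_E = {W}"
proof -
  have all: "{y\<in>W. reach_in W Kmp_E x y} = W" if "x \<in> W" for x
    using conn[OF that _ assms] by blast
  have "{{y\<in>W. reach_in W Kmp_E x y} | x. x\<in>W} = {W | x. x \<in> W}"
    by (intro Collect_cong) (use all in blast)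
  also have "\<dots> = {W}" using assms(1) by blast
  finally show ?thesis unfolding components_in_def .
qed

lemma comp_single:
  assumes "w \<in> W" "\<forall>y\<in>W. fst y = fst w"
  shows "{w} \<in> components_in W Kmp_E"
proof -
  have noE: "\<forall>y\<in>W. \<not> Kmp_E w y" using assms(2) by (simp add: Kmp_E_def)
  have r: "reach_in W Kmp_E w w" by (simp add: reach_in_def)
  have eq: "{y\<in>W. reach_in W Kmp_E w y} = {w}"
    using reach_only[of W Kmp_E w, OF noE] r assms(1) by blast
  show ?thesis unfolding components_in_def mem_Collect_eq
    by (rule exI[of _ w]) (use eq assms(1) in simp)
qed

lemma force_part:
  assumes "B \<subseteq> Kmp_V r q" "\<forall>w\<in>Kmp_V r q - B. fst w = i" "b \<in> B" "fst b \<noteq> i"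
  shows "(psd_step (Kmp_V r q) Kmp_E)\<^sup>*\<^sup>* B (Kmp_V r q)"
  using assms
proof (induction "card (Kmp_V r q - B)" arbitrary: B rule: less_induct)
  case less
  show ?case
  proof (cases "Kmp_V r q - B = {}")
    case True then have "B = Kmp_V r q" using less.prems(1) by blast
    then show ?thesis by simp
  next
    case False
    then obtain w where w: "w \<in> Kmp_V r q - B" by blast
    have h1: "{w} \<in> components_in (Kmp_V r q - B) Kmp_E"
      using comp_single[OF w] less.prems(2) w by auto
    have h2: "{x \<in> {w}. Kmp_E b x} = {w}" using less.prems w by (auto simp: Kmp_E_def)
    have st: "psd_step (Kmp_V r q) Kmp_E B (insert w B)"
      unfolding psd_step_def using h1 h2 less.prems(3) by blast
    have eq: "Kmp_V r q - insert w B = (Kmp_V r q - B) - {w}" by blast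
    have "card (Kmp_V r q - insert w B) < card (Kmp_V r q - B)"
      unfolding eq using w finite_V by (meson card_Diff1_less finite_Diff)
    then have "(psd_step (Kmp_V r q) Kmp_E)\<^sup>*\<^sup>* (insert w B) (Kmp_V r q)"
      using less.hyps[of "insert w B"] less.prems w by auto
    then show ?thesis using st by (rule converse_rtranclp_into_rtranclp[rotated])
  qed
qed

lemma forcing_shape:
  assumes "psd_forcing_set (Kmp_V r q) Kmp_E S" "S \<noteq> Kmp_V r q"
  shows "(\<exists>i. Kmp_V r q - S \<subseteq> Pt q i) \<or>
    (\<exists>u v. u \<in> S \<and> v \<in> Kmp_V r q - S \<and> fst v \<noteq> fst u \<and>
       Kmp_V r q - S \<subseteq> insert v (Pt q (fst u) - {u}))"
proof -
  define V where "V = Kmp_V r q"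
  define W where "W = V - S"
  have SV: "S \<subseteq> V" and rt: "(psd_step V Kmp_E)\<^sup>*\<^sup>* S V"
    using assms(1) by (auto simp: psd_forcing_set_def V_def)
  obtain B' where "psd_step V Kmp_E S B'"
    using rt assms(2) unfolding V_def by (metis converse_rtranclpE)
  then obtain u v C where u: "u \<in> S" and C: "C \<in> components_in W Kmp_E"
    and uv: "{w\<in>C. Kmp_E u w} = {v}" unfolding psd_step_def W_def by blast
  have Wne: "W \<noteq> {}" using SV assms(2) unfolding W_def V_def by blast
  have WV: "W \<subseteq> V" by (auto simp: W_def)
  show ?thesis
  proof (cases "\<exists>a\<in>W. \<exists>b\<in>W. fst a \<noteq> fst b")
    case False
    obtain w0 where w0: "w0 \<in> W" using Wne by blast
    have all: "\<forall>w\<in>W. fst w = fst w0" using False w0 by blast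
    have "W \<subseteq> Pt q (fst w0)"
    proof
      fix w assume w: "w \<in> W"
      have "snd w < q" using w WV Kmp_V_mem[of w r q] unfolding V_def by blast
      then show "w \<in> Pt q (fst w0)" using all w by (simp add: Pt_mem)
    qed
    then have "Kmp_V r q - S \<subseteq> Pt q (fst w0)" by (simp add: W_def V_def)
    then show ?thesis by (rule disjI1[OF exI])
  next
    case True
    then obtain a b where "a \<in> W" "b \<in> W" "fst a \<noteq> fst b" by blast
    then have "components_in W Kmp_E = {W}" by (rule comp_all)
    then have "C = W" using C by blast
    then have uv2: "{w\<in>W. fst u \<noteq> fst w} = {v}" using uv by (simp add: Kmp_E_def)
    have vin: "v \<in> {w\<in>W. fst u \<noteq> fst w}" using uv2 by simp
    then have v: "v \<in> W" "fst v \<noteq> fst u" by simp_all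
    have "W \<subseteq> insert v (Pt q (fst u) - {u})"
    proof
      fix w assume w: "w \<in> W"
      show "w \<in> insert v (Pt q (fst u) - {u})"
      proof (cases "fst w = fst u")
        case True
        have wu: "w \<noteq> u" using w u unfolding W_def by blast
        have "snd w < q" using w WV Kmp_V_mem[of w r q] unfolding V_def by blast
        then have "w \<in> Pt q (fst u)" using True by (simp add: Pt_mem)
        then show ?thesis using wu by blast
      next
        case False
        then have "w \<in> {w\<in>W. fst u \<noteq> fst w}" using w by simp
        then have "w \<in> {v}" by (simp only: uv2)
        then show ?thesis by simp
      qed
    qed
    then have "Kmp_V r q - S \<subseteq> insert v (Pt q (fst u) - {u})" by (simp add: W_def V_def)
    moreover have "v \<in> Kmp_V r q - S" using v by (simp add: W_def V_def)
    ultimately show ?thesis using u v(2) by blast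
  qed
qed

lemma forcing_card:
  assumes "psd_forcing_set (Kmp_V r q) Kmp_E S" "q \<ge> 1"
  shows "card (Kmp_V r q - S) \<le> q \<and>
    (card (Kmp_V r q - S) = q \<longrightarrow> (\<exists>j. goodW r q j (Kmp_V r q - S)))"
proof (cases "S = Kmp_V r q")
  case True then show ?thesis using assms(2) by simp
next
  case False
  define W where "W = Kmp_V r q - S"
  have SV: "S \<subseteq> Kmp_V r q" using assms(1) by (simp add: psd_forcing_set_def)
  have finW: "finite W" using finite_V by (simp add: W_def)
  have Wne: "W \<noteq> {}" using SV False by (auto simp: W_def)
  from forcing_shape[OF assms(1) False] show ?thesis
  proof (elim disjE exE conjE)
    fix i assume sub: "Kmp_V r q - S \<subseteq> Pt q i"
    have le: "card W \<le> q" using card_mono[OF finite_Pt sub] card_Pt unfolding W_def by metis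
    have "goodW r q i W" if "card W = q"
    proof -
      have eq: "W = Pt q i" using card_subset_eq[OF finite_Pt sub[folded W_def]] that card_Pt by metis
      obtain w where "w \<in> W" using Wne by blast
      then have "i < r" using eq sub by (auto simp: W_def Pt_mem Kmp_V_mem)
      then show ?thesis using eq by (simp add: goodW_def)
    qed
    then show ?thesis using le unfolding W_def by blast
  next
    fix u v assume u: "u \<in> S" and v: "v \<in> Kmp_V r q - S" "fst v \<noteq> fst u"
      and sub: "Kmp_V r q - S \<subseteq> insert v (Pt q (fst u) - {u})"
    have uP: "u \<in> Pt q (fst u)" using u SV by (auto simp: Pt_mem Kmp_V_mem)
    have vP: "v \<notin> Pt q (fst u) - {u}" using v by (auto simp: Pt_mem)
    have cT: "card (insert v (Pt q (fst u) - {u})) = q"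
      using vP uP assms(2) by (simp add: finite_Pt card_Pt)
    have finT: "finite (insert v (Pt q (fst u) - {u}))" by (simp add: finite_Pt)
    have le: "card W \<le> q" using card_mono[OF finT sub] cT unfolding W_def by metis
    have "goodW r q (fst u) W" if "card W = q"
    proof -
      have eq: "W = insert v (Pt q (fst u) - {u})"
        using card_subset_eq[OF finT sub[folded W_def]] that cT by metis
      have "fst u < r" using u SV by (auto simp: Kmp_V_mem)
      then show ?thesis using eq uP v unfolding goodW_def by blast
    qed
    then show ?thesis using le unfolding W_def by blast
  qed
qed

lemma good_sub:
  assumes "goodW r q j W" shows "W \<subseteq> Kmp_V r q"
  using assms Pt_sub unfolding goodW_def by blast

lemma good_forcing:
  assumes "goodW r q j W" "q \<ge> 2" "r \<ge> 2"
  shows "psd_forcing_set (Kmp_V r q) Kmp_E (Kmp_V r q - W) \<and> card W = q"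
proof -
  define V where "V = Kmp_V r q"
  have j: "j < r" using assms(1) by (simp add: goodW_def)
  have WV: "W \<subseteq> V" using good_sub[OF assms(1)] by (simp add: V_def)
  from assms(1) have "W = Pt q j \<or>
     (\<exists>u v. u \<in> Pt q j \<and> v \<in> V \<and> fst v \<noteq> j \<and> W = insert v (Pt q j - {u}))"
    by (simp add: goodW_def V_def)
  then show ?thesis
  proof (elim disjE exE conjE)
    assume W: "W = Pt q j"
    define j' where "j' = (if j = 0 then 1 else 0 :: nat)"
    have b: "(j', 0) \<in> V - W" "fst (j', 0) \<noteq> j"
      using assms j W by (auto simp: j'_def V_def Kmp_V_mem Pt_mem)
    have "(psd_step V Kmp_E)\<^sup>*\<^sup>* (V - W) V"
      unfolding V_def
      by (rule force_part[where i = j and b = "(j',0)"]) (use b W in \<open>auto simp: V_def Pt_mem\<close>)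
    then show ?thesis using W card_Pt by (simp add: psd_forcing_set_def V_def)
  next
    fix u v assume u: "u \<in> Pt q j" and v: "v \<in> V" "fst v \<noteq> j"
      and W: "W = insert v (Pt q j - {u})"
    define a where "a = (j, if snd u = 0 then 1 else 0 :: nat)"
    have a1: "a \<noteq> u" using u by (cases u) (auto simp: a_def Pt_mem)
    have a2: "a \<in> Pt q j" using assms(2) by (auto simp: a_def Pt_mem)
    have a: "a \<in> W" using a1 a2 W by simp
    have vW: "v \<in> W" using W by simp
    have comp: "components_in W Kmp_E = {W}"
      by (rule comp_all[OF vW a]) (use v in \<open>simp add: a_def\<close>)
    have uS: "u \<in> V - W" using u v W j by (auto simp: V_def Pt_mem Kmp_V_mem)
    have VVW: "V - (V - W) = W" using WV by blast
    have uv: "{w\<in>W. Kmp_E u w} = {v}" using W u v by (auto simp: Kmp_E_def Pt_mem)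
    have st: "psd_step V Kmp_E (V - W) (insert v (V - W))"
      unfolding psd_step_def VVW comp using uS uv by blast
    have "(psd_step V Kmp_E)\<^sup>*\<^sup>* (insert v (V - W)) V"
      unfolding V_def
      by (rule force_part[where i = j and b = v]) (use v W WV in \<open>auto simp: V_def Pt_mem\<close>)
    then have rt: "(psd_step V Kmp_E)\<^sup>*\<^sup>* (V - W) V"
      using st by (rule converse_rtranclp_into_rtranclp[rotated])
    have "card W = q" using W u v assms(2) by (simp add: finite_Pt card_Pt Pt_mem)
    then show ?thesis using rt by (simp add: psd_forcing_set_def V_def)
  qed
qed

definition Cls :: "nat \<Rightarrow> nat \<Rightarrow> nat \<Rightarrow> (nat \<times> nat) set set" where
  "Cls r q j = (\<lambda>W. Kmp_V r q - W) ` {W. goodW r q j W}"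

lemma good_Pt: "j < r \<Longrightarrow> goodW r q j (Pt q j)"
  by (simp add: goodW_def)

lemma card_forcing_S:
  assumes "psd_forcing_set (Kmp_V r q) Kmp_E S"
  shows "card S = r * q - card (Kmp_V r q - S)"
proof -
  have sub: "S \<subseteq> Kmp_V r q" using assms by (simp add: psd_forcing_set_def)
  have fin: "finite S" using finite_subset[OF sub finite_V] .
  have "card (Kmp_V r q - S) = card (Kmp_V r q) - card S" using card_Diff_subset[OF fin sub] .
  moreover have "card S \<le> card (Kmp_V r q)" using card_mono[OF finite_V sub] .
  ultimately show ?thesis unfolding card_V by linarith
qed

lemma Z_val:
  assumes "q \<ge> 4" "r \<ge> 2"
  shows "psd_Z (Kmp_V r q) Kmp_E = r * q - q"
  unfolding psd_Z_def
proof (rule Least_equality)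
  have g: "goodW r q 0 (Pt q 0)" using assms by (simp add: good_Pt)
  have "q \<le> r * q" using assms by simp
  have gf: "psd_forcing_set (Kmp_V r q) Kmp_E (Kmp_V r q - Pt q 0)"
    using good_forcing[OF g] assms by simp
  have "Kmp_V r q - (Kmp_V r q - Pt q 0) = Pt q 0" using Pt_sub[of 0 r q] assms by auto
  then have "card (Kmp_V r q - Pt q 0) = r * q - q"
    using card_forcing_S[OF gf] card_Pt by simp
  then show "\<exists>S. psd_forcing_set (Kmp_V r q) Kmp_E S \<and> card S = r * q - q"
    using gf by blast
next
  fix k assume "\<exists>S. psd_forcing_set (Kmp_V r q) Kmp_E S \<and> card S = k"
  then obtain S where S: "psd_forcing_set (Kmp_V r q) Kmp_E S" "card S = k" by blast
  have "card (Kmp_V r q - S) \<le> q" using forcing_card[OF S(1)] assms by simp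
  then show "r * q - q \<le> k" using card_forcing_S[OF S(1)] S(2) by simp
qed

lemma min_sets:
  assumes "q \<ge> 4" "r \<ge> 2"
  shows "min_psd_sets (Kmp_V r q) Kmp_E = \<Union> (Cls r q ` {..<r})"
proof
  show "min_psd_sets (Kmp_V r q) Kmp_E \<subseteq> \<Union> (Cls r q ` {..<r})"
  proof
    fix S assume "S \<in> min_psd_sets (Kmp_V r q) Kmp_E"
    then have S: "psd_forcing_set (Kmp_V r q) Kmp_E S" "card S = r * q - q"
      using Z_val[OF assms] by (auto simp: min_psd_sets_def)
    have fc: "card (Kmp_V r q - S) \<le> q \<and>
      (card (Kmp_V r q - S) = q \<longrightarrow> (\<exists>j. goodW r q j (Kmp_V r q - S)))"
      using forcing_card[OF S(1)] assms by simp
    have "q \<le> r * q" using assms by simp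
    then have "card (Kmp_V r q - S) = q" using card_forcing_S[OF S(1)] S(2) fc by linarith
    then obtain j where g: "goodW r q j (Kmp_V r q - S)" using fc by blast
    have j: "j < r" using g by (simp add: goodW_def)
    have sub: "S \<subseteq> Kmp_V r q" using S(1) by (simp add: psd_forcing_set_def)
    have "S = Kmp_V r q - (Kmp_V r q - S)" using sub by blast
    then have "S \<in> Cls r q j" unfolding Cls_def using g by blast
    then show "S \<in> \<Union> (Cls r q ` {..<r})" using j by blast
  qed
next
  show "\<Union> (Cls r q ` {..<r}) \<subseteq> min_psd_sets (Kmp_V r q) Kmp_E"
  proof
    fix S assume "S \<in> \<Union> (Cls r q ` {..<r})"
    then obtain j W where g: "goodW r q j W" and SW: "S = Kmp_V r q - W"
      unfolding Cls_def by blast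
    have gf: "psd_forcing_set (Kmp_V r q) Kmp_E S" "card W = q"
      using good_forcing[OF g] assms SW by auto
    have "Kmp_V r q - S = W" using good_sub[OF g] SW by blast
    then have "card S = r * q - q" using card_forcing_S[OF gf(1)] gf(2) by simp
    then show "S \<in> min_psd_sets (Kmp_V r q) Kmp_E"
      using gf Z_val[OF assms] by (simp add: min_psd_sets_def)
  qed
qed

lemma TS_TE: "TS_adj E a b \<Longrightarrow> TE_adj a b"
  unfolding TS_adj_def TE_adj_def by blast

lemma adj_base:
  assumes "goodW r q j W"
  shows "W = Pt q j \<or> (TS_adj Kmp_E (Kmp_V r q - W) (Kmp_V r q - Pt q j) \<and>
                        TS_adj Kmp_E (Kmp_V r q - Pt q j) (Kmp_V r q - W))"
proof -
  have j: "j < r" using assms by (simp add: goodW_def)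
  have PV: "Pt q j \<subseteq> Kmp_V r q" using Pt_sub[OF j] .
  from assms have "W = Pt q j \<or>
     (\<exists>u v. u \<in> Pt q j \<and> v \<in> Kmp_V r q \<and> fst v \<noteq> j \<and> W = insert v (Pt q j - {u}))"
    by (simp add: goodW_def)
  then show ?thesis
  proof (elim disjE exE conjE)
    fix u v assume u: "u \<in> Pt q j" and v: "v \<in> Kmp_V r q" "fst v \<noteq> j"
      and W: "W = insert v (Pt q j - {u})"
    have vP: "v \<notin> Pt q j" using v by (simp add: Pt_mem)
    have e1: "(Kmp_V r q - W) - (Kmp_V r q - Pt q j) = {u}" using u vP PV W by blast
    have e2: "(Kmp_V r q - Pt q j) - (Kmp_V r q - W) = {v}" using u vP PV v W by blast
    have uv: "Kmp_E u v" "Kmp_E v u" using u v by (auto simp: Kmp_E_def Pt_mem)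
    show ?thesis unfolding TS_adj_def using e1 e2 uv by blast
  qed simp
qed

lemma three_pts:
  assumes "q \<ge> 4"
  obtains a1 a2 a3 where "a1 \<in> Pt q j - {u}" "a2 \<in> Pt q j - {u}" "a3 \<in> Pt q j - {u}"
    "a1 \<noteq> a2" "a1 \<noteq> a3" "a2 \<noteq> a3"
proof -
  define a1 where "a1 = (j, if snd u = 0 then 3 else 0 :: nat)"
  define a2 where "a2 = (j, if snd u = 1 then 3 else 1 :: nat)"
  define a3 where "a3 = (j, if snd u = 2 then 3 else 2 :: nat)"
  have s: "snd a1 \<noteq> snd u" "snd a2 \<noteq> snd u" "snd a3 \<noteq> snd u"
    by (auto simp: a1_def a2_def a3_def)
  have n: "a1 \<noteq> u" "a2 \<noteq> u" "a3 \<noteq> u" using s by auto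
  have p: "a1 \<in> Pt q j" "a2 \<in> Pt q j" "a3 \<in> Pt q j" using assms
    by (auto simp: a1_def a2_def a3_def Pt_mem)
  have d: "a1 \<noteq> a2" "a1 \<noteq> a3" "a2 \<noteq> a3" by (auto simp: a1_def a2_def a3_def)
  show ?thesis using that n p d by blast
qed

lemma cross:
  assumes q: "q \<ge> 4" and ga: "goodW r q j Wa" and gb: "goodW r q k Wb"
    and te: "TE_adj (Kmp_V r q - Wa) (Kmp_V r q - Wb)"
  shows "k = j"
proof (rule ccontr)
  assume kj: "k \<noteq> j"
  have WaV: "Wa \<subseteq> Kmp_V r q" using good_sub[OF ga] .
  obtain v1 v2 where "(Kmp_V r q - Wb) - (Kmp_V r q - Wa) = {v2}"
    using te unfolding TE_adj_def by blast
  moreover have "(Kmp_V r q - Wb) - (Kmp_V r q - Wa) = Wa - Wb" using WaV by blast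
  ultimately have d: "Wa - Wb = {v2}" by simp
  obtain u where u: "Pt q j - {u} \<subseteq> Wa"
  proof -
    from ga have "Wa = Pt q j \<or>
     (\<exists>u v. u \<in> Pt q j \<and> v \<in> Kmp_V r q \<and> fst v \<noteq> j \<and> Wa = insert v (Pt q j - {u}))"
      by (simp add: goodW_def)
    then show ?thesis using that by blast
  qed
  obtain z where z: "\<forall>w\<in>Wb. fst w = j \<longrightarrow> w = z"
  proof -
    from gb have "Wb = Pt q k \<or>
     (\<exists>u v. u \<in> Pt q k \<and> v \<in> Kmp_V r q \<and> fst v \<noteq> k \<and> Wb = insert v (Pt q k - {u}))"
      by (simp add: goodW_def)
    then show ?thesis
    proof (elim disjE exE conjE)
      assume "Wb = Pt q k"
      then have "\<forall>w\<in>Wb. fst w = j \<longrightarrow> w = undefined" using kj by (simp add: Pt_mem)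
      then show ?thesis using that by blast
    next
      fix u' v' assume "Wb = insert v' (Pt q k - {u'})"
      then have "\<forall>w\<in>Wb. fst w = j \<longrightarrow> w = v'" using kj by (auto simp: Pt_mem)
      then show ?thesis using that by blast
    qed
  qed
  obtain a1 a2 a3 where a: "a1 \<in> Pt q j - {u}" "a2 \<in> Pt q j - {u}" "a3 \<in> Pt q j - {u}"
    "a1 \<noteq> a2" "a1 \<noteq> a3" "a2 \<noteq> a3" using three_pts[OF q] by metis
  have f: "fst a1 = j" "fst a2 = j" "fst a3 = j" using a by (auto simp: Pt_mem)
  have inWa: "a1 \<in> Wa" "a2 \<in> Wa" "a3 \<in> Wa" using a u by auto
  have c: "x = z \<or> x = v2" if "x \<in> Wa" "fst x = j" for x
  proof (cases "x \<in> Wb")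
    case True then show ?thesis using z that by blast
  next
    case False then have "x \<in> Wa - Wb" using that by blast
    then show ?thesis using d by blast
  qed
  show False using c[OF inWa(1) f(1)] c[OF inWa(2) f(2)] c[OF inWa(3) f(3)] a(4-6) by metis
qed

lemma Pt_in_Cls: "j < r \<Longrightarrow> Kmp_V r q - Pt q j \<in> Cls r q j"
  unfolding Cls_def using good_Pt by blast

lemma comps:
  assumes q: "q \<ge> 4" and r: "r \<ge> 2"
    and ts: "\<And>a b. TS_adj Kmp_E a b \<Longrightarrow> R a b"
    and te: "\<And>a b. R a b \<Longrightarrow> TE_adj a b"
  shows "components_in (\<Union> (Cls r q ` {..<r})) R = Cls r q ` {..<r}"
proof -
  define X where "X = \<Union> (Cls r q ` {..<r})"
  have key: "{y\<in>X. reach_in X R a y} = Cls r q j" if j: "j < r" and a: "a \<in> Cls r q j" for a j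
  proof
    show "{y\<in>X. reach_in X R a y} \<subseteq> Cls r q j"
    proof
      fix y assume "y \<in> {y\<in>X. reach_in X R a y}"
      then have "reach_in X R a y" by simp
      then show "y \<in> Cls r q j" unfolding reach_in_def
      proof (induction rule: rtranclp_induct)
        case base then show ?case using a .
      next
        case (step y z)
        then have yz: "z \<in> X" "R y z" "y \<in> Cls r q j" by auto
        obtain k where k: "k < r" "z \<in> Cls r q k" using yz(1) unfolding X_def by blast
        obtain Wa where Wa: "goodW r q j Wa" "y = Kmp_V r q - Wa" using yz(3) unfolding Cls_def by blast
        obtain Wb where Wb: "goodW r q k Wb" "z = Kmp_V r q - Wb" using k(2) unfolding Cls_def by blast
        have "TE_adj y z" using te yz(2) .
        then have "k = j" using cross[OF q Wa(1) Wb(1)] Wa(2) Wb(2) by simp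
        then show ?case using k by simp
      qed
    qed
  next
    define S0 where "S0 = Kmp_V r q - Pt q j"
    have S0: "S0 \<in> Cls r q j" using Pt_in_Cls[OF j] by (simp add: S0_def)
    have CX: "Cls r q j \<subseteq> X" using j unfolding X_def by blast
    have toS0: "reach_in X R b S0 \<and> reach_in X R S0 b" if b: "b \<in> Cls r q j" for b
    proof -
      obtain W where W: "goodW r q j W" "b = Kmp_V r q - W" using b unfolding Cls_def by blast
      from adj_base[OF W(1)] show ?thesis
      proof
        assume "W = Pt q j"
        then have "b = S0" using W(2) by (simp add: S0_def)
        then show ?thesis by (simp add: reach_in_def)
      next
        assume "TS_adj Kmp_E (Kmp_V r q - W) (Kmp_V r q - Pt q j) \<and>
                TS_adj Kmp_E (Kmp_V r q - Pt q j) (Kmp_V r q - W)"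
        then have "R b S0" "R S0 b" using ts W(2) by (auto simp: S0_def)
        then show ?thesis using b S0 CX unfolding reach_in_def
          by (auto intro: r_into_rtranclp)
      qed
    qed
    show "Cls r q j \<subseteq> {y\<in>X. reach_in X R a y}"
    proof
      fix y assume y: "y \<in> Cls r q j"
      have "reach_in X R a S0" using toS0[OF a] by blast
      moreover have "reach_in X R S0 y" using toS0[OF y] by blast
      ultimately have "reach_in X R a y" unfolding reach_in_def by (rule rtranclp_trans)
      then show "y \<in> {y\<in>X. reach_in X R a y}" using y CX by blast
    qed
  qed
  have "components_in X R = {{y\<in>X. reach_in X R a y} | a. a \<in> X}"
    by (simp add: components_in_def)
  also have "\<dots> = Cls r q ` {..<r}"
  proof
    show "{{y\<in>X. reach_in X R a y} | a. a \<in> X} \<subseteq> Cls r q ` {..<r}"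
    proof
      fix C assume "C \<in> {{y\<in>X. reach_in X R a y} | a. a \<in> X}"
      then obtain a where a: "a \<in> X" "C = {y\<in>X. reach_in X R a y}" by blast
      obtain j where j: "j < r" "a \<in> Cls r q j" using a(1) unfolding X_def by blast
      show "C \<in> Cls r q ` {..<r}" using key[OF j] a(2) j(1) by simp
    qed
  next
    show "Cls r q ` {..<r} \<subseteq> {{y\<in>X. reach_in X R a y} | a. a \<in> X}"
    proof
      fix C assume "C \<in> Cls r q ` {..<r}"
      then obtain j where j: "j < r" "C = Cls r q j" by blast
      have a: "Kmp_V r q - Pt q j \<in> X" using Pt_in_Cls[OF j(1)] j(1) unfolding X_def by blast
      have "C = {y\<in>X. reach_in X R (Kmp_V r q - Pt q j) y}"
        using key[OF j(1) Pt_in_Cls[OF j(1)]] j(2) by simp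
      then show "C \<in> {{y\<in>X. reach_in X R a y} | a. a \<in> X}" using a by blast
    qed
  qed
  finally show ?thesis unfolding X_def .
qed

lemma Cls_inj:
  assumes q: "q \<ge> 4"
  shows "inj_on (Cls r q) {..<r}"
proof
  fix j k assume j: "j \<in> {..<r}" and k: "k \<in> {..<r}" and e: "Cls r q j = Cls r q k"
  have "Kmp_V r q - Pt q j \<in> Cls r q k" using Pt_in_Cls[of j r q] j e by simp
  then obtain W where W: "goodW r q k W" "Kmp_V r q - Pt q j = Kmp_V r q - W"
    unfolding Cls_def by blast
  have "W = Pt q j" using W(2) good_sub[OF W(1)] Pt_sub[of j r q] j by blast
  then have g: "goodW r q k (Pt q j)" using W(1) by simp
  obtain a1 a2 a3 where a: "a1 \<in> Pt q k - {undefined}" "a2 \<in> Pt q k - {undefined}"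
    "a1 \<noteq> a2" using three_pts[OF q, of k undefined] by metis
  from g have "Pt q j = Pt q k \<or>
     (\<exists>u v. u \<in> Pt q k \<and> v \<in> Kmp_V r q \<and> fst v \<noteq> k \<and> Pt q j = insert v (Pt q k - {u}))"
    by (simp add: goodW_def)
  then show "j = k"
  proof (elim disjE exE conjE)
    assume "Pt q j = Pt q k"
    then have "a1 \<in> Pt q j" using a by simp
    then show ?thesis using a by (simp add: Pt_mem)
  next
    fix u v assume "Pt q j = insert v (Pt q k - {u})"
    then have "a1 \<in> Pt q j \<or> a2 \<in> Pt q j" using a by blast
    then show ?thesis using a by (auto simp: Pt_mem)
  qed
qed

theorem theorem4p15:
  fixes r q :: nat
  assumes "q \<ge> 4" and "r \<ge> 2"
  shows "num_components (min_psd_sets (Kmp_V r q) Kmp_E) (TS_adj Kmp_E) = r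
       \<and> num_components (min_psd_sets (Kmp_V r q) Kmp_E) TE_adj = r"
proof -
  have c: "card (Cls r q ` {..<r}) = r"
    using card_image[OF Cls_inj[OF assms(1)]] by simp
  have "components_in (\<Union> (Cls r q ` {..<r})) (TS_adj Kmp_E) = Cls r q ` {..<r}"
    by (rule comps[OF assms]) (auto intro: TS_TE)
  moreover have "components_in (\<Union> (Cls r q ` {..<r})) TE_adj = Cls r q ` {..<r}"
    by (rule comps[OF assms]) (auto intro: TS_TE)
  ultimately show ?thesis
    unfolding num_components_def min_sets[OF assms] using c by simp
qed

end
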